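(* Let $J$ satisfy: $\mathbb{Z}^d$-symmetric, $\sum_xJ(x)=1$, $\hat J(0)-\hat J(k)\ge K_0|k|^2/(2d)$ on $[-\pi,\pi]^d$, $\sum_x|x|^2J(x)=K_1$, $\sum_x|x|^2|J(x)|\le K_2$ (finite positive constants), and define for $t\ge0$ $$I_t(x):=\int_{[-\pi,\pi]^d}\frac{d^dk}{(2\pi)^d}e^{ik\cdot x}e^{-t\{1-\hat J(k)\}}.$$ Fix $\varepsilon>0$. Then for all $t\ge1/\varepsilon$ and all $x\in\mathbb{Z}^d$, $$I_t(x)=\Big(\frac{d}{2\pi K_1t}\Big)^{d/2}\exp\Big(-\frac{d|x|^2}{2tK_1}\Big)+R_3(t,x),\qquad |R_3(t,x)|\le o(t^{-d/2})+c_5e^{-c_2/\varepsilon}t^{-d/2},$$ where $c_5=2(d/(\pi K_0))^{d/2}$, $c_2=K_0/(4d)$, and the $o(t^{-d/2})$ term (as $t\to\infty$) is uniform in $x$ but may depend on $\varepsilon$.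
   Context: $\hat J(k)=\sum_xJ(x)e^{-ik\cdot x}$; $\mathbb{Z}^d$-symmetric means invariant under permutations and sign changes of coordinates. *)

theory Defs
  imports "HOL-Analysis.Analysis" "HOL-Library.Landau_Symbols"
begin

text \<open>Points of the lattice Z^d are int^'n, Fourier variables are real^'n, with d = CARD('n).\<close>

definition ldot :: "real^'n \<Rightarrow> int^'n \<Rightarrow> real" where
  "ldot k x = (\<Sum>i\<in>UNIV. k$i * real_of_int (x$i))"

definition lnorm2 :: "int^'n \<Rightarrow> real" where
  "lnorm2 x = (\<Sum>i\<in>UNIV. (real_of_int (x$i))^2)"

definition Zd_symmetric :: "(int^'n \<Rightarrow> real) \<Rightarrow> bool" where
  "Zd_symmetric J \<longleftrightarrow>
     (\<forall>p x. bij (p :: 'n \<Rightarrow> 'n) \<longrightarrow> J (\<chi> i. x $ p i) = J x) \<and>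
     (\<forall>s x. (\<forall>i. s i = 1 \<or> s i = -1) \<longrightarrow> J (\<chi> i. (s i :: int) * x $ i) = J x)"

definition Jhat :: "(int^'n \<Rightarrow> real) \<Rightarrow> real^'n \<Rightarrow> complex" where
  "Jhat J k = (\<Sum>\<^sub>\<infinity>x. complex_of_real (J x) * exp (- \<i> * complex_of_real (ldot k x)))"

definition It :: "(int^'n \<Rightarrow> real) \<Rightarrow> real \<Rightarrow> int^'n \<Rightarrow> complex" where
  "It J t x = integral (cbox (\<chi> i. - pi) (\<chi> i. pi))
      (\<lambda>k. exp (\<i> * complex_of_real (ldot k x)) * exp (- complex_of_real t * (1 - Jhat J k)))
      / complex_of_real ((2 * pi) ^ CARD('n))"

end

theory Submission
  imports Defs "HOL-Probability.Characteristic_Functions" "HOL-Real_Asymp.Real_Asymp"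
begin

lemma gauss1:
  fixes b y :: real assumes b: "b > 0"
  shows "has_bochner_integral lborel (\<lambda>s. exp (\<i> * complex_of_real (s * y)) * complex_of_real (exp (- b * s\<^sup>2)))
           (complex_of_real (sqrt (pi / b) * exp (- y\<^sup>2 / (4 * b))))"
proof -
  define c where "c = sqrt (2 * b)"
  have c: "c > 0" using b by (simp add: c_def)
  have c2: "c\<^sup>2 = 2 * b" using b by (simp add: c_def)
  define t where "t = y / c"
  have meas: "(\<lambda>x. iexp (t * x)) \<in> borel_measurable lborel" by measurable
  interpret real_distribution std_normal_distribution by (rule real_dist_normal_dist)
  have int0: "integrable std_normal_distribution (\<lambda>x. iexp (t * x))"
    by (rule integrable_const_bound[where B=1]) (auto simp: norm_exp_i_times)
  have char: "(CLINT x|std_normal_distribution. iexp (t * x)) = complex_of_real (exp (- t\<^sup>2 / 2))"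
    using char_std_normal_distribution unfolding char_def by metis
  define F where "F x = std_normal_density x *\<^sub>R iexp (t * x)" for x
  have intF: "integrable lborel F"
    using int0 unfolding F_def by (subst (asm) integrable_density) auto
  have intFval: "integral\<^sup>L lborel F = complex_of_real (exp (- t\<^sup>2 / 2))"
    using char unfolding F_def by (subst (asm) integral_density) auto
  have eq: "F (0 + c * s) = complex_of_real (1 / sqrt (2 * pi)) * (exp (\<i> * complex_of_real (s * y)) * complex_of_real (exp (- b * s\<^sup>2)))" for s
  proof -
    have e0: "t * (c * s) = s * y" using c by (simp add: t_def)
    have e1: "iexp (t * (0 + c * s)) = exp (\<i> * complex_of_real (s * y))" using e0 by (simp only: add_0_left)
    have e2: "exp (- (0 + c * s)\<^sup>2 / 2) = exp (- b * s\<^sup>2)" using c2 by (simp add: power_mult_distrib)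
    show ?thesis by (simp only: F_def std_normal_density_def e1 e2) (simp add: scaleR_conv_of_real mult_ac)
  qed
  have int2: "integrable lborel (\<lambda>s. F (0 + c * s))"
    using lborel_integrable_real_affine[OF intF, of c 0] c by simp
  have val2: "integral\<^sup>L lborel F = \<bar>c\<bar> *\<^sub>R integral\<^sup>L lborel (\<lambda>s. F (0 + c * s))"
    using lborel_integral_real_affine[of c F 0] c by simp
  define G where "G s = exp (\<i> * complex_of_real (s * y)) * complex_of_real (exp (- b * s\<^sup>2))" for s
  have FG: "(\<lambda>s. F (0 + c * s)) = (\<lambda>s. complex_of_real (1 / sqrt (2 * pi)) * G s)"
    using eq unfolding G_def by auto
  have intG: "integrable lborel G"
  proof -
    have "integrable lborel (\<lambda>s. complex_of_real (sqrt (2 * pi)) * (complex_of_real (1 / sqrt (2 * pi)) * G s))"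
      using int2 unfolding FG by (rule integrable_mult_right)
    then show ?thesis by (simp add: mult.assoc[symmetric] of_real_mult[symmetric] del: of_real_mult)
  qed
  have "integral\<^sup>L lborel G = complex_of_real (sqrt (2 * pi) / c * exp (- t\<^sup>2 / 2))"
  proof -
    have "complex_of_real (exp (- t\<^sup>2 / 2)) = complex_of_real c * (complex_of_real (1 / sqrt (2 * pi)) * integral\<^sup>L lborel G)"
      using val2 c unfolding intFval FG by (simp add: scaleR_conv_of_real)
    then show ?thesis using c
      by (simp add: field_simps of_real_mult[symmetric] del: of_real_mult)
  qed
  also have "sqrt (2 * pi) / c * exp (- t\<^sup>2 / 2) = sqrt (pi / b) * exp (- y\<^sup>2 / (4 * b))"
  proof -
    have "sqrt (2 * pi) / c = sqrt (pi / b)" unfolding c_def using b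
      by (simp add: real_sqrt_divide[symmetric])
    moreover have "t\<^sup>2 / 2 = y\<^sup>2 / (4 * b)" unfolding t_def using c2 c b
      by (simp add: power_divide)
    ultimately show ?thesis by simp
  qed
  finally show ?thesis using intG unfolding G_def by (simp add: has_bochner_integral_iff)
qed

lemma prod_lborel:
  fixes f :: "'a::euclidean_space \<Rightarrow> real \<Rightarrow> 'b::{real_normed_field,banach,second_countable_topology}"
  assumes int: "\<And>b. b \<in> Basis \<Longrightarrow> integrable lborel (f b)"
  shows "has_bochner_integral lborel (\<lambda>x::'a. \<Prod>b\<in>Basis. f b (x \<bullet> b)) (\<Prod>b\<in>Basis. integral\<^sup>L lborel (f b))"
proof -
  interpret product_sigma_finite "\<lambda>_::'a. lborel::real measure"
    by (simp add: product_sigma_finite_def lborel.sigma_finite_measure_axioms)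
  have [measurable]: "\<And>b. b \<in> Basis \<Longrightarrow> f b \<in> borel_measurable borel"
  proof -
    fix b :: 'a assume "b \<in> Basis" then show "f b \<in> borel_measurable borel" using int[of b] by simp
  qed
  define T where "T = (\<lambda>g. \<Sum>b\<in>(Basis::'a set). g b *\<^sub>R b)"
  have Tm[measurable]: "T \<in> borel_measurable (\<Pi>\<^sub>M b\<in>(Basis::'a set). lborel)"
    unfolding T_def by measurable
  have Tb: "T g \<bullet> b = g b" if "b \<in> Basis" for g b
    using that unfolding T_def by (simp add: inner_sum_left inner_Basis if_distrib[of "\<lambda>x. g _ * x"] sum.delta' cong: if_cong)
  have i1: "integrable (\<Pi>\<^sub>M b\<in>(Basis::'a set). lborel) (\<lambda>g. \<Prod>b\<in>Basis. f b (g b))"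
    by (rule product_integrable_prod) (auto intro: int)
  have e1: "(\<lambda>g. \<Prod>b\<in>Basis. f b (g b)) = (\<lambda>g. \<Prod>b\<in>Basis. f b (T g \<bullet> b))"
    by (simp add: Tb)
  have v1: "(\<integral>g. (\<Prod>b\<in>Basis. f b (g b)) \<partial>(\<Pi>\<^sub>M b\<in>(Basis::'a set). lborel)) = (\<Prod>b\<in>Basis. integral\<^sup>L lborel (f b))"
    by (rule product_integral_prod) (auto intro: int)
  have F: "(\<lambda>x::'a. \<Prod>b\<in>Basis. f b (x \<bullet> b)) \<in> borel_measurable borel" by measurable
  have "integrable (distr (\<Pi>\<^sub>M b\<in>(Basis::'a set). lborel) borel T) (\<lambda>x::'a. \<Prod>b\<in>Basis. f b (x \<bullet> b))"
    using i1 unfolding e1 by (subst integrable_distr_eq) (auto simp: F)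
  moreover have "integral\<^sup>L (distr (\<Pi>\<^sub>M b\<in>(Basis::'a set). lborel) borel T) (\<lambda>x::'a. \<Prod>b\<in>Basis. f b (x \<bullet> b))
     = (\<Prod>b\<in>Basis. integral\<^sup>L lborel (f b))"
    using v1 unfolding e1 by (subst integral_distr) (auto simp: F)
  ultimately show ?thesis unfolding T_def lborel_eq[symmetric] by (simp add: has_bochner_integral_iff)
qed

lemma norm2_sum_Basis: "(norm (k::'a::euclidean_space))\<^sup>2 = (\<Sum>c\<in>Basis. (k \<bullet> c)\<^sup>2)"
  unfolding power2_norm_eq_inner by (subst euclidean_inner) (simp add: power2_eq_square)

lemma gaussd:
  fixes y :: "'a::euclidean_space" and b :: real assumes b: "b > 0"
  shows "has_bochner_integral lborel (\<lambda>k. exp (\<i> * complex_of_real (k \<bullet> y)) * complex_of_real (exp (- b * (norm k)\<^sup>2)))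
     (complex_of_real ((pi / b) powr (real DIM('a) / 2) * exp (- (norm y)\<^sup>2 / (4 * b))))"
proof -
  define f where "f c s = exp (\<i> * complex_of_real (s * (y \<bullet> c))) * complex_of_real (exp (- b * s\<^sup>2))" for c :: 'a and s
  have g1: "has_bochner_integral lborel (f c) (complex_of_real (sqrt (pi / b) * exp (- (y \<bullet> c)\<^sup>2 / (4 * b))))" for c
    unfolding f_def by (rule gauss1[OF b])
  have P: "has_bochner_integral lborel (\<lambda>x::'a. \<Prod>c\<in>Basis. f c (x \<bullet> c)) (\<Prod>c\<in>Basis. integral\<^sup>L lborel (f c))"
    using g1 by (intro prod_lborel) (auto simp: has_bochner_integral_iff)
  have e1: "(\<Prod>c\<in>Basis. f c (x \<bullet> c)) = exp (\<i> * complex_of_real (x \<bullet> y)) * complex_of_real (exp (- b * (norm x)\<^sup>2))" for x :: 'a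
  proof -
    have "(\<Prod>c\<in>Basis. f c (x \<bullet> c)) = (\<Prod>c\<in>Basis. exp (\<i> * complex_of_real ((x \<bullet> c) * (y \<bullet> c)))) * (\<Prod>c\<in>Basis. complex_of_real (exp (- b * (x \<bullet> c)\<^sup>2)))"
      unfolding f_def by (rule prod.distrib)
    also have "(\<Prod>c\<in>Basis. exp (\<i> * complex_of_real ((x \<bullet> c) * (y \<bullet> c)))) = exp (\<Sum>c\<in>Basis. \<i> * complex_of_real ((x \<bullet> c) * (y \<bullet> c)))"
      by (rule exp_sum[symmetric]) simp
    also have "(\<Sum>c\<in>Basis. \<i> * complex_of_real ((x \<bullet> c) * (y \<bullet> c))) = \<i> * complex_of_real (x \<bullet> y)"
      by (simp add: sum_distrib_left euclidean_inner[of x y])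
    also have "(\<Prod>c\<in>Basis. complex_of_real (exp (- b * (x \<bullet> c)\<^sup>2))) = complex_of_real (exp (\<Sum>c\<in>Basis. - b * (x \<bullet> c)\<^sup>2))"
      by (simp add: exp_sum)
    also have "(\<Sum>c\<in>Basis. - b * (x \<bullet> c)\<^sup>2) = - b * (norm x)\<^sup>2"
      by (simp add: norm2_sum_Basis sum_distrib_left)
    finally show ?thesis .
  qed
  have e2: "(\<Prod>c\<in>(Basis::'a set). integral\<^sup>L lborel (f c)) = complex_of_real ((pi / b) powr (real DIM('a) / 2) * exp (- (norm y)\<^sup>2 / (4 * b)))"
  proof -
    have "(\<Prod>c\<in>(Basis::'a set). integral\<^sup>L lborel (f c)) = (\<Prod>c\<in>(Basis::'a set). complex_of_real (sqrt (pi / b) * exp (- (y \<bullet> c)\<^sup>2 / (4 * b))))"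
      using g1 by (simp add: has_bochner_integral_iff)
    also have "\<dots> = complex_of_real (sqrt (pi / b) ^ DIM('a) * exp (\<Sum>c\<in>(Basis::'a set). - (y \<bullet> c)\<^sup>2 / (4 * b)))"
      by (simp add: prod.distrib exp_sum)
    also have "(\<Sum>c\<in>(Basis::'a set). - (y \<bullet> c)\<^sup>2 / (4 * b)) = - (norm y)\<^sup>2 / (4 * b)"
      by (simp add: norm2_sum_Basis sum_divide_distrib sum_negf)
    also have "sqrt (pi / b) ^ DIM('a) = (pi / b) powr (real DIM('a) / 2)"
      using b by (simp add: sqrt_def root_powr_inverse powr_realpow[symmetric] powr_powr)
    finally show ?thesis .
  qed
  show ?thesis using P unfolding e1 e2 .
qed


definition xr :: "int^'n \<Rightarrow> real^'n" where "xr x = (\<chi> i. real_of_int (x$i))"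

lemma ldot_xr: "ldot k x = k \<bullet> xr x"
  by (simp add: ldot_def xr_def inner_vec_def)

lemma lnorm2_xr: "lnorm2 x = (norm (xr x))\<^sup>2"
  unfolding power2_norm_eq_inner by (simp add: lnorm2_def xr_def inner_vec_def power2_eq_square)

lemma xr_comp_le: "(xr x $ i)\<^sup>2 \<le> lnorm2 x"
  unfolding lnorm2_def xr_def by (auto intro: member_le_sum)

lemma abs_prod_le_sq: "\<bar>a * b\<bar> \<le> ((a::real)\<^sup>2 + b\<^sup>2) / 2"
proof -
  have "0 \<le> (\<bar>a\<bar> - \<bar>b\<bar>)\<^sup>2" by simp
  then show ?thesis by (simp add: power2_eq_square algebra_simps abs_mult)
qed

lemma xr_prod_le: "\<bar>xr x $ i * xr x $ j\<bar> \<le> lnorm2 x"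
proof -
  have "\<bar>xr x $ i * xr x $ j\<bar> \<le> ((xr x $ i)\<^sup>2 + (xr x $ j)\<^sup>2) / 2"
    by (rule abs_prod_le_sq)
  also have "\<dots> \<le> lnorm2 x" using xr_comp_le[of x i] xr_comp_le[of x j] by simp
  finally show ?thesis .
qed

lemma one_minus_cos_bound: fixes w :: real shows "0 \<le> 1 - cos w \<and> 1 - cos w \<le> w\<^sup>2 / 2"
proof -
  have "cos w = 1 - 2 * sin (w/2) ^ 2" using cos_double_sin[of "w/2"] by simp
  moreover have "sin (w/2) ^ 2 \<le> (w/2)^2"
    using abs_sin_x_le_abs_x[of "w/2"] by (metis abs_le_square_iff)
  ultimately show ?thesis by (simp add: power_divide)
qed

lemma lim_cos_scaled: "((\<lambda>t::real. t * (1 - cos (v / sqrt t))) \<longlongrightarrow> v\<^sup>2 / 2) at_top"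
proof -
  have "((\<lambda>t::real. t * (1 - cos (v / sqrt t))) \<longlongrightarrow> v * v / 2) at_top" by real_asymp
  then show ?thesis by (simp add: power2_eq_square)
qed

lemma summable_integrable_real:
  fixes f :: "'a \<Rightarrow> real"
  assumes "f summable_on UNIV" shows "integrable (count_space UNIV) f"
proof -
  have "(\<lambda>x. norm (f x)) summable_on UNIV" using assms summable_on_iff_abs_summable_on_real by blast
  then have "Infinite_Set_Sum.abs_summable_on f UNIV" using abs_summable_equivalent by blast
  then show ?thesis by (simp add: Infinite_Set_Sum.abs_summable_on_def)
qed

lemma infsum_lint:
  fixes f :: "'a \<Rightarrow> 'b::{banach, second_countable_topology}"
  assumes "integrable (count_space UNIV) f" shows "infsum f UNIV = integral\<^sup>L (count_space UNIV) f"
  using infsetsum_infsum[of f UNIV] assms by (simp add: infsetsum_def Infinite_Set_Sum.abs_summable_on_def)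

lemma lint_reindex:
  fixes f h :: "'a \<Rightarrow> 'b::{banach, second_countable_topology}"
  assumes "bij g" "\<And>x. f (g x) = h x" "integrable (count_space UNIV) f" "integrable (count_space UNIV) h"
  shows "integral\<^sup>L (count_space UNIV) h = integral\<^sup>L (count_space UNIV) f"
proof -
  have "infsum h UNIV = infsum f UNIV"
    using infsum_reindex_bij_betw[of g UNIV UNIV f] assms(1,2) by simp
  then show ?thesis using assms(3,4) by (simp add: infsum_lint)
qed

locale lclt =
  fixes J :: "int^'n \<Rightarrow> real" and K1 :: real
  assumes sym: "Zd_symmetric J"
    and sum1: "(J has_sum 1) UNIV"
    and K1def: "((\<lambda>x. lnorm2 x * J x) has_sum K1) UNIV"
    and K2sum: "(\<lambda>x. lnorm2 x * \<bar>J x\<bar>) summable_on UNIV"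
begin

abbreviation "M \<equiv> count_space (UNIV :: (int^'n) set)"

lemma iJ: "integrable M J"
  using sum1 summable_integrable_real by (auto simp: summable_on_def)

lemma intJ: "integral\<^sup>L M J = 1"
  using sum1 iJ infsum_lint infsumI by metis

lemma iJ2: "integrable M (\<lambda>x. lnorm2 x * \<bar>J x\<bar>)"
  using K2sum summable_integrable_real by blast

lemma iK1: "integrable M (\<lambda>x. lnorm2 x * J x)"
  using K1def summable_integrable_real by (auto simp: summable_on_def)

lemma intK1: "integral\<^sup>L M (\<lambda>x. lnorm2 x * J x) = K1"
  using K1def iK1 infsum_lint infsumI by metis

lemma Jflip: "(\<forall>i. s i = 1 \<or> s i = -1) \<Longrightarrow> J (\<chi> i. (s i :: int) * x $ i) = J x"
  using sym unfolding Zd_symmetric_def by blast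

lemma Jperm: "bij (p :: 'n \<Rightarrow> 'n) \<Longrightarrow> J (\<chi> i. x $ p i) = J x"
  using sym unfolding Zd_symmetric_def by blast

lemma Jneg: "J (- x) = J x"
proof -
  have "(\<chi> i. (-1::int) * x $ i) = - x" by (simp add: vec_eq_iff)
  then show ?thesis using Jflip[of "\<lambda>_. -1" x] by simp
qed

lemma xr_neg: "xr (- x) = - xr x" by (simp add: xr_def vec_eq_iff)

lemma bij_neg: "bij (uminus :: int^'n \<Rightarrow> int^'n)"
  by (rule o_bij[of uminus]) (auto simp: fun_eq_iff)

definition C :: "real^'n \<Rightarrow> real" where
  "C k = integral\<^sup>L M (\<lambda>x. J x * cos (k \<bullet> xr x))"

lemma iJcos: "integrable M (\<lambda>x. J x * cos (k \<bullet> xr x))"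
  by (rule Bochner_Integration.integrable_bound[OF iJ]) (auto intro!: AE_I2 mult_left_le simp: abs_mult)

lemma iJsin: "integrable M (\<lambda>x. J x * sin (k \<bullet> xr x))"
  by (rule Bochner_Integration.integrable_bound[OF iJ]) (auto intro!: AE_I2 mult_left_le simp: abs_mult)

lemma sin_zero: "integral\<^sup>L M (\<lambda>x. J x * sin (k \<bullet> xr x)) = 0"
proof -
  have "integral\<^sup>L M (\<lambda>x. - (J x * sin (k \<bullet> xr x))) = integral\<^sup>L M (\<lambda>x. J x * sin (k \<bullet> xr x))"
    by (rule lint_reindex[OF bij_neg]) (auto simp: Jneg xr_neg iJsin)
  then show ?thesis by simp
qed

lemma Jhat_eq: "Jhat J k = complex_of_real (C k)"
proof -
  have e: "complex_of_real (J x) * exp (- \<i> * complex_of_real (ldot k x))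
     = complex_of_real (J x * cos (k \<bullet> xr x)) - \<i> * complex_of_real (J x * sin (k \<bullet> xr x))" for x
    by (simp add: complex_eq_iff ldot_xr Re_exp Im_exp)
  have a: "integrable M (\<lambda>x. complex_of_real (J x * cos (k \<bullet> xr x)))" by (subst complex_of_real_integrable_eq) (rule iJcos)
  have b: "integrable M (\<lambda>x. complex_of_real (J x * sin (k \<bullet> xr x)))" by (subst complex_of_real_integrable_eq) (rule iJsin)
  have i1: "integrable M (\<lambda>x. complex_of_real (J x) * exp (- \<i> * complex_of_real (ldot k x)))"
    unfolding e by (rule Bochner_Integration.integrable_diff[OF a Bochner_Integration.integrable_mult_right[OF b]])
  have "Jhat J k = integral\<^sup>L M (\<lambda>x. complex_of_real (J x) * exp (- \<i> * complex_of_real (ldot k x)))"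
    unfolding Jhat_def using i1 by (rule infsum_lint)
  also have "\<dots> = complex_of_real (C k) - \<i> * complex_of_real (integral\<^sup>L M (\<lambda>x. J x * sin (k \<bullet> xr x)))"
    unfolding e C_def
    by (simp only: Bochner_Integration.integral_diff[OF a Bochner_Integration.integrable_mult_right[OF b]] integral_mult_right_zero integral_complex_of_real)
  finally show ?thesis by (simp add: sin_zero)
qed

lemma C0: "C 0 = 1"
  by (simp add: C_def intJ)

lemma C_cont: "continuous_on UNIV C"
proof -
  have "isCont C k" for k
    unfolding continuous_at_sequentially comp_def
  proof (intro allI impI)
    fix X assume X: "X \<longlonglongrightarrow> k"
    show "(\<lambda>n. C (X n)) \<longlonglongrightarrow> C k"
      unfolding C_def
    proof (rule integral_dominated_convergence[where w="\<lambda>x. \<bar>J x\<bar>"])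
      show "integrable M (\<lambda>x. \<bar>J x\<bar>)" using iJ by auto
      show "AE x in M. (\<lambda>n. J x * cos (X n \<bullet> xr x)) \<longlonglongrightarrow> J x * cos (k \<bullet> xr x)"
        using X by (auto intro!: tendsto_intros)
      show "AE x in M. norm (J x * cos (X n \<bullet> xr x)) \<le> \<bar>J x\<bar>" for n
        by (auto intro!: AE_I2 mult_left_le simp: abs_mult)
    qed auto
  qed
  then show ?thesis by (simp add: continuous_at_imp_continuous_on)
qed

definition m :: "'n \<Rightarrow> 'n \<Rightarrow> real" where
  "m i j = integral\<^sup>L M (\<lambda>x. J x * (xr x $ i * xr x $ j))"

lemma iJij: "integrable M (\<lambda>x. J x * (xr x $ i * xr x $ j))"
proof (rule Bochner_Integration.integrable_bound[OF iJ2])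
  show "AE x in M. norm (J x * (xr x $ i * xr x $ j)) \<le> norm (lnorm2 x * \<bar>J x\<bar>)"
  proof (intro AE_I2)
    fix x
    have p: "\<bar>xr x $ i * xr x $ j\<bar> \<le> lnorm2 x" by (rule xr_prod_le)
    have "0 \<le> lnorm2 x" by (simp add: lnorm2_def sum_nonneg)
    moreover from p have "\<bar>J x\<bar> * \<bar>xr x $ i * xr x $ j\<bar> \<le> \<bar>J x\<bar> * lnorm2 x" by (intro mult_left_mono) simp_all
    ultimately show "norm (J x * (xr x $ i * xr x $ j)) \<le> norm (lnorm2 x * \<bar>J x\<bar>)"
      by (simp add: abs_mult mult.commute)
  qed
qed auto

lemma m_offdiag: assumes "i \<noteq> j" shows "m i j = 0"
proof -
  define s :: "'n \<Rightarrow> int" where "s l = (if l = i then -1 else 1)" for l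
  define g :: "int^'n \<Rightarrow> int^'n" where "g x = (\<chi> l. s l * x $ l)" for x
  have gg: "g (g x) = x" for x by (simp add: g_def s_def vec_eq_iff)
  have bg: "bij g" by (rule o_bij[of g]) (auto simp: fun_eq_iff gg)
  have Jg: "J (g x) = J x" for x unfolding g_def by (rule Jflip) (simp add: s_def)
  have eqf: "J (g x) * (xr (g x) $ i * xr (g x) $ j) = - (J x * (xr x $ i * xr x $ j))" for x
    using assms by (simp add: Jg) (simp add: g_def xr_def s_def)
  have "integral\<^sup>L M (\<lambda>x. - (J x * (xr x $ i * xr x $ j))) = m i j"
    unfolding m_def by (rule lint_reindex[OF bg, where f="\<lambda>x. J x * (xr x $ i * xr x $ j)", OF eqf]) (auto intro: iJij)
  then show ?thesis by (simp add: m_def)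
qed

lemma m_diag_eq: "m i i = m j j"
proof -
  define p :: "'n \<Rightarrow> 'n" where "p l = (if l = i then j else if l = j then i else l)" for l
  define g :: "int^'n \<Rightarrow> int^'n" where "g x = (\<chi> l. x $ p l)" for x
  have pp: "p (p l) = l" for l by (simp add: p_def)
  have bp: "bij p" by (rule o_bij[of p]) (auto simp: fun_eq_iff pp)
  have gg: "g (g x) = x" for x by (simp add: g_def vec_eq_iff pp)
  have bg: "bij g" by (rule o_bij[of g]) (auto simp: fun_eq_iff gg)
  have Jg: "J (g x) = J x" for x unfolding g_def by (rule Jperm[OF bp])
  have eqf: "J (g x) * (xr (g x) $ i * xr (g x) $ i) = J x * (xr x $ j * xr x $ j)" for x
    by (simp add: Jg) (simp add: g_def xr_def p_def)
  have "m j j = m i i"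
    unfolding m_def by (rule lint_reindex[OF bg, where f="\<lambda>x. J x * (xr x $ i * xr x $ i)", OF eqf]) (auto intro: iJij)
  then show ?thesis by simp
qed

lemma m_diag: "m i i = K1 / real CARD('n)"
proof -
  have "(\<Sum>l\<in>UNIV. m l l) = integral\<^sup>L M (\<lambda>x. \<Sum>l\<in>UNIV. J x * (xr x $ l * xr x $ l))"
    unfolding m_def by (simp add: iJij)
  also have "(\<lambda>x. \<Sum>l\<in>UNIV. J x * (xr x $ l * xr x $ l)) = (\<lambda>x. lnorm2 x * J x)"
    by (auto simp: lnorm2_def xr_def sum_distrib_left power2_eq_square mult_ac)
  finally have "(\<Sum>l\<in>UNIV. m l l) = K1" by (simp add: intK1)
  moreover have "(\<Sum>l\<in>UNIV. m l l) = (\<Sum>l\<in>(UNIV::'n set). m i i)"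
    by (rule sum.cong) (auto intro: m_diag_eq)
  then have "(\<Sum>l\<in>UNIV. m l l) = real CARD('n) * m i i" by simp
  ultimately show ?thesis by (simp add: field_simps)
qed

lemma iJk2: "integrable M (\<lambda>x. J x * (k \<bullet> xr x)\<^sup>2)"
proof -
  have e: "J x * (k \<bullet> xr x)\<^sup>2 = (\<Sum>i\<in>UNIV. \<Sum>j\<in>UNIV. (k$i * k$j) * (J x * (xr x $ i * xr x $ j)))" for x
    by (simp add: inner_vec_def power2_eq_square sum_product sum_distrib_left mult_ac)
  show ?thesis unfolding e
    by (intro Bochner_Integration.integrable_sum Bochner_Integration.integrable_mult_right iJij)
qed

lemma mom2: "integral\<^sup>L M (\<lambda>x. J x * (k \<bullet> xr x)\<^sup>2) = K1 * (norm k)\<^sup>2 / real CARD('n)"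
proof -
  have e: "J x * (k \<bullet> xr x)\<^sup>2 = (\<Sum>i\<in>UNIV. \<Sum>j\<in>UNIV. (k$i * k$j) * (J x * (xr x $ i * xr x $ j)))" for x
    by (simp add: inner_vec_def power2_eq_square sum_product sum_distrib_left mult_ac)
  have "integral\<^sup>L M (\<lambda>x. J x * (k \<bullet> xr x)\<^sup>2) = (\<Sum>i\<in>UNIV. \<Sum>j\<in>UNIV. (k$i * k$j) * m i j)"
    unfolding e m_def by (simp add: iJij)
  also have "\<dots> = (\<Sum>i\<in>UNIV. (k$i * k$i) * m i i)"
  proof (intro sum.cong refl)
    fix i assume "i \<in> (UNIV::'n set)"
    have "(\<Sum>j\<in>UNIV. (k$i * k$j) * m i j) = (\<Sum>j\<in>UNIV. if j = i then (k$i * k$i) * m i i else 0)"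
      by (rule sum.cong) (auto simp: m_offdiag)
    then show "(\<Sum>j\<in>UNIV. (k$i * k$j) * m i j) = (k$i * k$i) * m i i" by simp
  qed
  also have "\<dots> = K1 * (norm k)\<^sup>2 / real CARD('n)"
    unfolding m_diag power2_norm_eq_inner inner_vec_def
    by (simp add: sum_distrib_left sum_distrib_right sum_divide_distrib mult_ac)
  finally show ?thesis .
qed

lemma key_limit:
  "((\<lambda>t. t * (1 - C ((1 / sqrt t) *\<^sub>R k))) \<longlongrightarrow> K1 * (norm k)\<^sup>2 / (2 * real CARD('n))) at_top"
proof -
  define s where "s t x = J x * (t * (1 - cos ((k \<bullet> xr x) / sqrt t)))" for t x
  have ev: "\<forall>\<^sub>F t in at_top. integral\<^sup>L M (s t) = t * (1 - C ((1 / sqrt t) *\<^sub>R k))"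
  proof (rule eventually_mono[OF eventually_gt_at_top[of 0]])
    fix t :: real assume "t > 0"
    have "integral\<^sup>L M (s t) = t * (integral\<^sup>L M J - integral\<^sup>L M (\<lambda>x. J x * cos ((k \<bullet> xr x) / sqrt t)))"
    proof -
      have "s t = (\<lambda>x. t * (J x - J x * cos ((k \<bullet> xr x) / sqrt t)))"
        by (auto simp: s_def algebra_simps)
      moreover have "integrable M (\<lambda>x. J x * cos ((k \<bullet> xr x) / sqrt t))"
        using iJcos[of "(1 / sqrt t) *\<^sub>R k"] by simp
      ultimately show ?thesis using iJ by simp
    qed
    also have "integral\<^sup>L M (\<lambda>x. J x * cos ((k \<bullet> xr x) / sqrt t)) = C ((1 / sqrt t) *\<^sub>R k)"
      by (simp add: C_def)
    finally show "integral\<^sup>L M (s t) = t * (1 - C ((1 / sqrt t) *\<^sub>R k))" by (simp add: intJ)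
  qed
  have lim: "((\<lambda>t. integral\<^sup>L M (s t)) \<longlongrightarrow> integral\<^sup>L M (\<lambda>x. J x * ((k \<bullet> xr x)\<^sup>2 / 2))) at_top"
  proof (rule integral_dominated_convergence_at_top[where w="\<lambda>x. (norm k)\<^sup>2 / 2 * (lnorm2 x * \<bar>J x\<bar>)"])
    show "integrable M (\<lambda>x. (norm k)\<^sup>2 / 2 * (lnorm2 x * \<bar>J x\<bar>))" using iJ2 by auto
    show "AE x in M. ((\<lambda>t. s t x) \<longlongrightarrow> J x * ((k \<bullet> xr x)\<^sup>2 / 2)) at_top"
      unfolding s_def by (intro AE_I2 tendsto_mult_left lim_cos_scaled)
    show "\<forall>\<^sub>F t in at_top. AE x in M. norm (s t x) \<le> (norm k)\<^sup>2 / 2 * (lnorm2 x * \<bar>J x\<bar>)"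
    proof (rule eventually_mono[OF eventually_gt_at_top[of 0]], intro AE_I2)
      fix t :: real and x assume t: "t > 0"
      define v where "v = k \<bullet> xr x"
      have b: "0 \<le> 1 - cos (v / sqrt t)" "1 - cos (v / sqrt t) \<le> (v / sqrt t)\<^sup>2 / 2"
        using one_minus_cos_bound by auto
      have "t * (1 - cos (v / sqrt t)) \<le> t * ((v / sqrt t)\<^sup>2 / 2)"
        using b t by (intro mult_left_mono) auto
      also have "\<dots> = v\<^sup>2 / 2" using t by (simp add: power_divide)
      also have "v\<^sup>2 \<le> (norm k)\<^sup>2 * lnorm2 x"
      proof -
        have "\<bar>v\<bar> \<le> \<bar>norm k * norm (xr x)\<bar>" unfolding v_def using Cauchy_Schwarz_ineq2[of k "xr x"] by simp
        then have "v\<^sup>2 \<le> (norm k * norm (xr x))\<^sup>2" by (metis abs_le_square_iff)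
        then show ?thesis by (simp add: lnorm2_xr power_mult_distrib)
      qed
      finally have le: "t * (1 - cos (v / sqrt t)) \<le> (norm k)\<^sup>2 * lnorm2 x / 2" by simp
      have nn: "0 \<le> t * (1 - cos (v / sqrt t))" using b t by simp
      have "norm (s t x) = \<bar>J x\<bar> * (t * (1 - cos (v / sqrt t)))"
      proof -
        have "\<bar>t * (1 - cos (v / sqrt t))\<bar> = t * (1 - cos (v / sqrt t))" using nn by (rule abs_of_nonneg)
        then show ?thesis unfolding s_def v_def real_norm_def abs_mult by simp
      qed
      also have "\<dots> \<le> \<bar>J x\<bar> * ((norm k)\<^sup>2 * lnorm2 x / 2)"
        using le by (rule mult_left_mono) simp
      also have "\<dots> = (norm k)\<^sup>2 / 2 * (lnorm2 x * \<bar>J x\<bar>)" by simp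
      finally show "norm (s t x) \<le> (norm k)\<^sup>2 / 2 * (lnorm2 x * \<bar>J x\<bar>)" .
    qed
  qed auto
  have "integral\<^sup>L M (\<lambda>x. J x * ((k \<bullet> xr x)\<^sup>2 / 2)) = K1 * (norm k)\<^sup>2 / (2 * real CARD('n))"
  proof -
    have "integral\<^sup>L M (\<lambda>x. J x * ((k \<bullet> xr x)\<^sup>2 / 2)) = integral\<^sup>L M (\<lambda>x. J x * (k \<bullet> xr x)\<^sup>2) / 2"
      by (simp add: mult.assoc[symmetric])
    then show ?thesis using mom2[of k] by simp
  qed
  with lim have "((\<lambda>t. integral\<^sup>L M (s t)) \<longlongrightarrow> K1 * (norm k)\<^sup>2 / (2 * real CARD('n))) at_top" by (simp add: mult.commute)
  then show ?thesis using ev by (rule Lim_transform_eventually)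
qed

end


lemma lborel_integral_scale:
  fixes f :: "'a::euclidean_space \<Rightarrow> real" and c :: real
  assumes c: "c \<noteq> 0" and f[measurable]: "f \<in> borel_measurable borel"
  shows "integral\<^sup>L lborel f = \<bar>c\<bar> ^ DIM('a) * integral\<^sup>L lborel (\<lambda>x. f (c *\<^sub>R x))"
proof -
  have eq: "lborel = density (distr lborel borel (\<lambda>x. (0::'a) + c *\<^sub>R x)) (\<lambda>_. \<bar>c\<bar>^DIM('a))"
    by (rule lborel_affine[OF c])
  have "integral\<^sup>L lborel f = integral\<^sup>L (density (distr lborel borel (\<lambda>x. (0::'a) + c *\<^sub>R x)) (\<lambda>_. \<bar>c\<bar>^DIM('a))) f"
    by (rule arg_cong[where f="\<lambda>M. integral\<^sup>L M f", OF eq])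
  also have "\<dots> = \<bar>c\<bar> ^ DIM('a) * integral\<^sup>L lborel (\<lambda>x. f (c *\<^sub>R x))"
    by (simp add: integral_density integral_distr)
  finally show ?thesis .
qed

lemma gaussr:
  assumes b: "b > 0"
  shows "integrable lborel (\<lambda>k::'a::euclidean_space. exp (- b * (norm k)\<^sup>2))"
proof -
  have "integrable lborel (\<lambda>k::'a. exp (\<i> * complex_of_real (k \<bullet> 0)) * complex_of_real (exp (- b * (norm k)\<^sup>2)))"
    using gaussd[OF b, of "0::'a"] by (simp add: has_bochner_integral_iff)
  then have "integrable lborel (\<lambda>k::'a. complex_of_real (exp (- b * (norm k)\<^sup>2)))" by simp
  then show ?thesis by (simp add: complex_of_real_integrable_eq)
qed


lemma scale_pow:
  assumes t: "t > 0"
  shows "\<bar>1 / sqrt t\<bar> ^ n = t powr (- real n / 2)"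
proof -
  have s: "sqrt t = t powr (1/2)" using t by (simp add: powr_half_sqrt)
  have "\<bar>1 / sqrt t\<bar> = 1 / sqrt t" using t by simp
  also have "\<dots> = t powr (- (1 / 2))" unfolding s by (rule powr_minus_divide[symmetric])
  finally have "\<bar>1 / sqrt t\<bar> ^ n = (t powr (- (1 / 2))) ^ n" by simp
  also have "\<dots> = t powr (real n * (- (1 / 2)))" using t by (subst powr_power) auto
  finally show ?thesis by simp
qed

lemma pow_as_powr:
  assumes "x > 0" shows "x ^ n = (x\<^sup>2) powr (real n / 2)"
proof -
  have "(x\<^sup>2) powr (real n / 2) = (x powr 2) powr (real n / 2)" using assms by simp
  also have "\<dots> = x powr (2 * (real n / 2))" by (rule powr_powr)
  also have "\<dots> = x powr (real n)" by simp
  also have "\<dots> = x ^ n" using assms by (rule powr_realpow)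
  finally show ?thesis by simp
qed


lemma Gval:
  fixes t K1 L :: real and n :: nat
  assumes t: "t > 0" and K1: "K1 > 0" and n: "n > 0"
  shows "(pi / (t * (K1 / (2 * real n)))) powr (real n / 2) * exp (- L / (4 * (t * (K1 / (2 * real n))))) / (2 * pi) ^ n
    = (real n / (2 * pi * K1 * t)) powr (real n / 2) * exp (- real n * L / (2 * t * K1))"
proof -
  have a1: "- L / (4 * (t * (K1 / (2 * real n)))) = - real n * L / (2 * t * K1)"
    using t K1 n by (simp add: field_simps)
  have p: "(2 * pi) ^ n = ((2 * pi)\<^sup>2) powr (real n / 2)"
    by (rule pow_as_powr) simp
  have a2: "pi / (t * (K1 / (2 * real n))) / (2 * pi)\<^sup>2 = real n / (2 * pi * K1 * t)"
    using t K1 n by (simp add: field_simps power2_eq_square)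
  have "(pi / (t * (K1 / (2 * real n)))) powr (real n / 2) / (2 * pi) ^ n
     = (pi / (t * (K1 / (2 * real n))) / (2 * pi)\<^sup>2) powr (real n / 2)"
    unfolding p by (rule powr_divide[symmetric])
  also have "\<dots> = (real n / (2 * pi * K1 * t)) powr (real n / 2)" unfolding a2 ..
  finally have "(pi / (t * (K1 / (2 * real n)))) powr (real n / 2) / (2 * pi) ^ n = (real n / (2 * pi * K1 * t)) powr (real n / 2)" .
  then show ?thesis unfolding a1 by (simp add: divide_simps)
qed


theorem lemma2p2:
  fixes J :: "int^'n \<Rightarrow> real" and K0 K1 K2 \<epsilon> :: real
  assumes sym: "Zd_symmetric J"
    and sum1: "(J has_sum 1) UNIV"
    and K0pos: "K0 > 0" and K1pos: "K1 > 0" and K2pos: "K2 > 0"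
    and infra: "\<And>k::real^'n. (\<forall>i. - pi \<le> k$i \<and> k$i \<le> pi) \<Longrightarrow>
        Re (Jhat J 0 - Jhat J k) \<ge> K0 * (norm k)^2 / (2 * real CARD('n))"
    and K1def: "((\<lambda>x. lnorm2 x * J x) has_sum K1) UNIV"
    and K2sum: "(\<lambda>x. lnorm2 x * \<bar>J x\<bar>) summable_on UNIV"
    and K2bd: "(\<Sum>\<^sub>\<infinity>x. lnorm2 x * \<bar>J x\<bar>) \<le> K2"
    and eps: "\<epsilon> > 0"
  shows "\<exists>g :: real \<Rightarrow> real. g \<in> o(\<lambda>t. t powr (- real CARD('n) / 2)) \<and>
    (\<forall>t x. t \<ge> 1 / \<epsilon> \<longrightarrow>
       norm (It J t x - complex_of_real
               ((real CARD('n) / (2 * pi * K1 * t)) powr (real CARD('n) / 2)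
                * exp (- real CARD('n) * lnorm2 x / (2 * t * K1))))
       \<le> g t + 2 * (real CARD('n) / (pi * K0)) powr (real CARD('n) / 2)
              * exp (- (K0 / (4 * real CARD('n))) / \<epsilon>) * t powr (- real CARD('n) / 2))"
proof -
  interpret lclt J K1 using sym sum1 K1def K2sum by unfold_locales
  have npos: "real CARD('n) > 0" by simp
  define a where "a = K1 / (2 * real CARD('n))"
  have apos: "a > 0" unfolding a_def using K1pos by simp
  define b0 where "b0 = K0 / (2 * real CARD('n))"
  have b0pos: "b0 > 0" unfolding b0_def using K0pos by simp
  define Q :: "(real^'n) set" where "Q = cbox (\<chi> i. - pi) (\<chi> i. pi)"
  have memQ: "k \<in> Q \<longleftrightarrow> (\<forall>i. - pi \<le> k$i \<and> k$i \<le> pi)" for k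
    unfolding Q_def by (simp add: mem_box_cart)
  have Qs[measurable]: "Q \<in> sets borel" unfolding Q_def by simp
  have Qfin: "emeasure lborel Q < \<infinity>" unfolding Q_def by (rule emeasure_lborel_cbox_finite)
  have iQ: "integrable lborel (indicator Q :: real^'n \<Rightarrow> real)"
    using Qs Qfin by (simp add: integrable_indicator_iff)
  have Cm[measurable]: "C \<in> borel_measurable borel" by (rule borel_measurable_continuous_onI[OF C_cont])
  have lowC: "b0 * (norm k)\<^sup>2 \<le> 1 - C k" if "k \<in> Q" for k
  proof -
    have "Re (Jhat J 0 - Jhat J k) \<ge> K0 * (norm k)^2 / (2 * real CARD('n))"
      using infra that memQ by blast
    then show ?thesis by (simp add: Jhat_eq C0 b0_def)
  qed
  have Cle: "0 \<le> 1 - C k" if "k \<in> Q" for k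
    using lowC[OF that] b0pos by (smt (verit) zero_le_power2 mult_nonneg_nonneg)
  define H where "H t k = \<bar>indicator Q k * exp (- t * (1 - C k)) - exp (- (t * a) * (norm k)\<^sup>2)\<bar>" for t k
  define g where "g t = integral\<^sup>L lborel (H t) / (2 * pi) ^ CARD('n)" for t
  have Hm[measurable]: "H t \<in> borel_measurable borel" for t unfolding H_def by measurable
  have Hint: "integrable lborel (H t)" if t: "t > 0" for t
  proof (rule Bochner_Integration.integrable_bound)
    show "integrable lborel (\<lambda>k. indicator Q k + exp (- (t * a) * (norm k)\<^sup>2))"
      using iQ gaussr[of "t * a"] t apos by (intro Bochner_Integration.integrable_add) auto
    show "H t \<in> borel_measurable lborel" by simp
    show "AE k in lborel. norm (H t k) \<le> norm (indicator Q k + exp (- (t * a) * (norm k)\<^sup>2))"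
    proof (intro AE_I2)
      fix k
      have A1: "indicator Q k * exp (- t * (1 - C k)) \<le> indicator Q k"
        using Cle[of k] t by (auto simp: indicator_def mult_nonneg_nonneg)
      have A0: "0 \<le> indicator Q k * exp (- t * (1 - C k))" by (simp add: indicator_def)
      have B0: "0 \<le> exp (- (t * a) * (norm k)\<^sup>2)" by simp
      show "norm (H t k) \<le> norm (indicator Q k + exp (- (t * a) * (norm k)\<^sup>2))"
        unfolding H_def real_norm_def using A0 A1 B0 by linarith
    qed
  qed
  have bound: "norm (It J t x - complex_of_real
               ((real CARD('n) / (2 * pi * K1 * t)) powr (real CARD('n) / 2)
                * exp (- real CARD('n) * lnorm2 x / (2 * t * K1)))) \<le> g t" if t: "t > 0" for t x
  proof -
    define \<phi> where "\<phi> k = exp (\<i> * complex_of_real (k \<bullet> xr x)) * complex_of_real (exp (- t * (1 - C k)))" for k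
    define \<psi> where "\<psi> k = exp (\<i> * complex_of_real (k \<bullet> xr x)) * complex_of_real (exp (- (t * a) * (norm k)\<^sup>2))" for k
    define P where "P = (2 * pi) ^ CARD('n)"
    have Ppos: "P > 0" unfolding P_def by simp
    have fe: "(\<lambda>k. exp (\<i> * complex_of_real (ldot k x)) * exp (- complex_of_real t * (1 - Jhat J k))) = \<phi>"
    proof
      fix k
      have "- complex_of_real t * (1 - Jhat J k) = complex_of_real (- t * (1 - C k))" by (simp add: Jhat_eq)
      then show "exp (\<i> * complex_of_real (ldot k x)) * exp (- complex_of_real t * (1 - Jhat J k)) = \<phi> k"
        unfolding \<phi>_def ldot_xr by (simp only: exp_of_real)
    qed
    have It_eq: "It J t x = integral Q \<phi> / complex_of_real P"
      unfolding It_def Q_def P_def fe ..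
    have \<phi>m[measurable]: "\<phi> \<in> borel_measurable borel" unfolding \<phi>_def by measurable
    have \<psi>m[measurable]: "\<psi> \<in> borel_measurable borel" unfolding \<psi>_def by measurable
    have i\<phi>: "integrable lborel (\<lambda>k. indicator Q k *\<^sub>R \<phi> k)"
    proof (rule Bochner_Integration.integrable_bound[OF iQ])
      show "(\<lambda>k. indicator Q k *\<^sub>R \<phi> k) \<in> borel_measurable lborel" by simp
      show "AE k in lborel. norm (indicator Q k *\<^sub>R \<phi> k) \<le> norm (indicator Q k :: real)"
      proof (intro AE_I2)
        fix k
        show "norm (indicator Q k *\<^sub>R \<phi> k) \<le> norm (indicator Q k :: real)"
        proof (cases "k \<in> Q")
          case True
          then have "exp (- t * (1 - C k)) \<le> 1" using Cle[of k] t by (simp add: mult_nonneg_nonneg)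
          then show ?thesis using True unfolding \<phi>_def by (simp add: norm_mult)
        qed simp
      qed
    qed
    have HKeq: "integral Q \<phi> = integral\<^sup>L lborel (\<lambda>k. indicator Q k *\<^sub>R \<phi> k)"
    proof -
      have "integral Q \<phi> = integral UNIV (\<lambda>k. if k \<in> Q then \<phi> k else 0)"
        by (rule Henstock_Kurzweil_Integration.integral_restrict_UNIV[symmetric])
      also have "(\<lambda>k. if k \<in> Q then \<phi> k else 0) = (\<lambda>k. indicator Q k *\<^sub>R \<phi> k)"
        by (auto simp: indicator_def fun_eq_iff)
      also have "integral UNIV \<dots> = integral\<^sup>L lborel (\<lambda>k. indicator Q k *\<^sub>R \<phi> k)"
        by (rule integral_lborel[OF i\<phi>])
      finally show ?thesis .
    qed
    have ta: "t * a > 0" using t apos by simp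
    have hg: "has_bochner_integral lborel \<psi>
       (complex_of_real ((pi / (t * a)) powr (real CARD('n) / 2) * exp (- (norm (xr x))\<^sup>2 / (4 * (t * a)))))"
      using gaussd[OF ta, of "xr x"] unfolding \<psi>_def by simp
    have i\<psi>: "integrable lborel \<psi>" and v\<psi>: "integral\<^sup>L lborel \<psi> =
       complex_of_real ((pi / (t * a)) powr (real CARD('n) / 2) * exp (- (norm (xr x))\<^sup>2 / (4 * (t * a))))"
      using hg by (auto simp: has_bochner_integral_iff)
    have Geq: "(real CARD('n) / (2 * pi * K1 * t)) powr (real CARD('n) / 2) * exp (- real CARD('n) * lnorm2 x / (2 * t * K1))
       = (pi / (t * a)) powr (real CARD('n) / 2) * exp (- (norm (xr x))\<^sup>2 / (4 * (t * a))) / P"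
      unfolding a_def P_def lnorm2_xr using Gval[OF t K1pos, of "CARD('n)" "(norm (xr x))\<^sup>2"] by simp
    have diff: "It J t x - complex_of_real ((real CARD('n) / (2 * pi * K1 * t)) powr (real CARD('n) / 2) * exp (- real CARD('n) * lnorm2 x / (2 * t * K1)))
       = integral\<^sup>L lborel (\<lambda>k. indicator Q k *\<^sub>R \<phi> k - \<psi> k) / complex_of_real P"
      unfolding It_eq HKeq Geq Bochner_Integration.integral_diff[OF i\<phi> i\<psi>] v\<psi>
      by (simp add: diff_divide_distrib)
    have nb: "norm (integral\<^sup>L lborel (\<lambda>k. indicator Q k *\<^sub>R \<phi> k - \<psi> k)) \<le> integral\<^sup>L lborel (H t)"
    proof (rule Bochner_Integration.integral_norm_bound_integral)
      show "integrable lborel (\<lambda>k. indicator Q k *\<^sub>R \<phi> k - \<psi> k)"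
        using i\<phi> i\<psi> by (rule Bochner_Integration.integrable_diff)
      show "integrable lborel (H t)" by (rule Hint[OF t])
      fix k :: "real^'n" assume "k \<in> space lborel"
      have eqk: "indicator Q k *\<^sub>R \<phi> k - \<psi> k = exp (\<i> * complex_of_real (k \<bullet> xr x)) *
          complex_of_real (indicator Q k * exp (- t * (1 - C k)) - exp (- (t * a) * (norm k)\<^sup>2))"
        unfolding \<phi>_def \<psi>_def by (simp add: scaleR_conv_of_real algebra_simps)
      show "norm (indicator Q k *\<^sub>R \<phi> k - \<psi> k) \<le> H t k"
        unfolding eqk H_def norm_mult norm_of_real by simp
    qed
    show ?thesis unfolding diff g_def P_def[symmetric]
      using nb Ppos by (simp add: norm_divide divide_right_mono)
  qed

  have lo: "g \<in> o(\<lambda>t. t powr (- real CARD('n) / 2))"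
  proof (rule smalloI_tendsto)
    show "\<forall>\<^sub>F t in at_top. t powr (- real CARD('n) / 2) \<noteq> 0"
      using eventually_gt_at_top[of 0] by eventually_elim simp
    define s where "s t k = H t ((1 / sqrt t) *\<^sub>R k)" for t k
    define W where "W k = exp (- b0 * (norm k)\<^sup>2) + exp (- a * (norm k)\<^sup>2)" for k :: "real^'n"
    have sm[measurable]: "s t \<in> borel_measurable lborel" for t unfolding s_def H_def by measurable
    have eqs: "g t / t powr (- real CARD('n) / 2) = integral\<^sup>L lborel (s t) / (2 * pi) ^ CARD('n)" if t: "t > 0" for t
    proof -
      have c: "1 / sqrt t \<noteq> 0" using t by simp
      have "integral\<^sup>L lborel (H t) = \<bar>1 / sqrt t\<bar> ^ DIM(real^'n) * integral\<^sup>L lborel (s t)"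
        unfolding s_def by (rule lborel_integral_scale[OF c Hm])
      also have "\<bar>1 / sqrt t\<bar> ^ DIM(real^'n) = t powr (- real CARD('n) / 2)"
        using scale_pow[OF t, of "CARD('n)"] by simp
      finally show ?thesis unfolding g_def using t by simp
    qed
    have L0: "((\<lambda>t. integral\<^sup>L lborel (s t)) \<longlongrightarrow> integral\<^sup>L lborel (\<lambda>_::real^'n. 0::real)) at_top"
    proof (rule integral_dominated_convergence_at_top[where w=W])
      show "integrable lborel W" unfolding W_def
        using gaussr[OF b0pos] gaussr[OF apos] by (intro Bochner_Integration.integrable_add) auto
      show "AE k in lborel. ((\<lambda>t. s t k) \<longlongrightarrow> 0) at_top"
      proof (intro AE_I2)
        fix k :: "real^'n"
        have ev: "\<forall>\<^sub>F t in at_top. \<bar>exp (- (t * (1 - C ((1 / sqrt t) *\<^sub>R k)))) - exp (- a * (norm k)\<^sup>2)\<bar> = s t k"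
          using eventually_ge_at_top[of "(norm k / pi)\<^sup>2 + 1"]
        proof eventually_elim
          case (elim t)
          have t: "t > 0" using elim by (smt (verit) zero_le_power2)
          have "norm k / pi \<le> sqrt t"
            using elim real_le_rsqrt by (smt (verit) zero_le_power2)
          then have nk: "norm k / sqrt t \<le> pi" using t by (simp add: field_simps)
          have inQ: "(1 / sqrt t) *\<^sub>R k \<in> Q"
            unfolding memQ
          proof
            fix i
            have "\<bar>k $ i\<bar> / sqrt t \<le> norm k / sqrt t" using t component_le_norm_cart[of k i]
              by (simp add: divide_right_mono)
            then have ab: "\<bar>k $ i\<bar> / sqrt t \<le> pi" using nk t by simp
            have "\<bar>k $ i\<bar> / sqrt t = \<bar>k $ i / sqrt t\<bar>" using t by simp
            with ab have "\<bar>k $ i / sqrt t\<bar> \<le> pi" by simp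
            then have "k $ i / sqrt t \<le> pi \<and> - (k $ i / sqrt t) \<le> pi" by (simp only: abs_le_iff)
            then show "- pi \<le> ((1 / sqrt t) *\<^sub>R k) $ i \<and> ((1 / sqrt t) *\<^sub>R k) $ i \<le> pi"
              by simp
          qed
          have nn: "- (t * a) * (norm ((1 / sqrt t) *\<^sub>R k))\<^sup>2 = - a * (norm k)\<^sup>2"
            using t by (simp add: power_mult_distrib power_divide)
          show ?case unfolding s_def H_def nn using inQ by simp
        qed
        have "((\<lambda>t. t * (1 - C ((1 / sqrt t) *\<^sub>R k))) \<longlongrightarrow> a * (norm k)\<^sup>2) at_top"
          using key_limit[of k] unfolding a_def by (simp add: field_simps)
        then have "((\<lambda>t. \<bar>exp (- (t * (1 - C ((1 / sqrt t) *\<^sub>R k)))) - exp (- a * (norm k)\<^sup>2)\<bar>)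
             \<longlongrightarrow> \<bar>exp (- (a * (norm k)\<^sup>2)) - exp (- a * (norm k)\<^sup>2)\<bar>) at_top"
          by (rule tendsto_rabs[OF tendsto_diff[OF tendsto_exp[OF tendsto_minus] tendsto_const]])
        then have "((\<lambda>t. \<bar>exp (- (t * (1 - C ((1 / sqrt t) *\<^sub>R k)))) - exp (- a * (norm k)\<^sup>2)\<bar>) \<longlongrightarrow> 0) at_top"
          by simp
        then show "((\<lambda>t. s t k) \<longlongrightarrow> 0) at_top" using ev by (rule Lim_transform_eventually)
      qed
      show "\<forall>\<^sub>F t in at_top. AE k in lborel. norm (s t k) \<le> W k"
        using eventually_gt_at_top[of 0]
      proof eventually_elim
        case (elim t)
        then have t: "t > 0" .
        show ?case
        proof (intro AE_I2)
          fix k :: "real^'n"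
          define u where "u = (1 / sqrt t) *\<^sub>R k"
          have nn: "- (t * a) * (norm u)\<^sup>2 = - a * (norm k)\<^sup>2" "t * (norm u)\<^sup>2 = (norm k)\<^sup>2"
            using t by (simp_all add: u_def power_mult_distrib power_divide)
          have A1: "indicator Q u * exp (- t * (1 - C u)) \<le> exp (- b0 * (norm k)\<^sup>2)"
          proof (cases "u \<in> Q")
            case True
            have "t * (b0 * (norm u)\<^sup>2) \<le> t * (1 - C u)" using lowC[OF True] t by simp
            then have "b0 * (norm k)\<^sup>2 \<le> t * (1 - C u)" using nn(2) by (simp add: mult_ac)
            then show ?thesis using True by simp
          qed simp
          have A0: "0 \<le> indicator Q u * exp (- t * (1 - C u))" by (simp add: indicator_def)
          have B0: "0 \<le> exp (- (t * a) * (norm u)\<^sup>2)" by simp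
          have "s t k = \<bar>indicator Q u * exp (- t * (1 - C u)) - exp (- a * (norm k)\<^sup>2)\<bar>"
            unfolding s_def H_def u_def[symmetric] nn(1) ..
          then show "norm (s t k) \<le> W k" unfolding W_def real_norm_def using A0 A1
            by (smt (verit) exp_gt_zero)
        qed
      qed
    qed auto
    then have "((\<lambda>t. integral\<^sup>L lborel (s t) / (2 * pi) ^ CARD('n)) \<longlongrightarrow> 0 / (2 * pi) ^ CARD('n)) at_top"
      by (intro tendsto_divide tendsto_const) auto
    then have "((\<lambda>t. integral\<^sup>L lborel (s t) / (2 * pi) ^ CARD('n)) \<longlongrightarrow> 0) at_top" by simp
    moreover have "\<forall>\<^sub>F t in at_top. integral\<^sup>L lborel (s t) / (2 * pi) ^ CARD('n) = g t / t powr (- real CARD('n) / 2)"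
      using eventually_gt_at_top[of 0] by eventually_elim (rule eqs[symmetric])
    ultimately show "((\<lambda>t. g t / t powr (- real CARD('n) / 2)) \<longlongrightarrow> 0) at_top"
      by (rule Lim_transform_eventually)
  qed

  show ?thesis
  proof (intro exI[of _ g] conjI allI impI lo)
    fix t x assume "1 / \<epsilon> \<le> t"
    then have t: "t > 0" using eps by (smt (verit) divide_pos_pos)
    have "0 \<le> 2 * (real CARD('n) / (pi * K0)) powr (real CARD('n) / 2)
              * exp (- (K0 / (4 * real CARD('n))) / \<epsilon>) * t powr (- real CARD('n) / 2)"
      by simp
    then show "norm (It J t x - complex_of_real
               ((real CARD('n) / (2 * pi * K1 * t)) powr (real CARD('n) / 2)
                * exp (- real CARD('n) * lnorm2 x / (2 * t * K1))))
       \<le> g t + 2 * (real CARD('n) / (pi * K0)) powr (real CARD('n) / 2)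
              * exp (- (K0 / (4 * real CARD('n))) / \<epsilon>) * t powr (- real CARD('n) / 2)"
      using bound[OF t, of x] by linarith
  qed
qed

end
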